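(* Let $0<d<\pi/2$, $\mathscr{D}_d=\{\zeta\in\mathbb{C}:|\Im\zeta|<d\}$, $\mathscr{D}_d^{-}=\{\zeta\in\mathscr{D}_d:\Re\zeta<0\}$, $\mathscr{D}_d^{+}=\{\zeta\in\mathscr{D}_d:\Re\zeta\ge0\}$, and $\psi(t)=\sinh[(\pi/2)\sinh t]$. Assume $f$ is analytic on $\psi(\mathscr{D}_d)$ and there are constants $K,\alpha,\beta>0$ with $|f(z)|\le K|1+z^2|^{-(\alpha+1)/2}$ for $z\in\psi(\mathscr{D}_d^-)$ and $|f(z)|\le K|1+z^2|^{-(\beta+1)/2}$ for $z\in\psi(\mathscr{D}_d^+)$. Let $\mu=\min\{\alpha,\beta\}$, $\nu=\max\{\alpha,\beta\}$. Then $F(\zeta)=f(\psi(\zeta))\psi'(\zeta)$ belongs to $\mathbf{L}^{\mathrm{DE}}_{L,R,\alpha,\beta}(\mathscr{D}_d)$ with $L=2^{\nu}K/\{\cos(\frac\pi2\sin d)\}^{(\nu-\mu)/2}$ and $R=2^{\nu}K$.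
   Context: For positive $L,R,\alpha,\beta$ and $0<d<\pi/2$, $\mathbf{L}^{\mathrm{DE}}_{L,R,\alpha,\beta}(\mathscr{D}_d)$ is the set of functions $F$ analytic on $\mathscr{D}_d$ such that for all $\zeta\in\mathscr{D}_d$, $|F(\zeta)|\le\frac{(\pi/2)L|\cosh\zeta|}{|1+e^{-\pi\sinh\zeta}|^{\alpha/2}|1+e^{\pi\sinh\zeta}|^{\beta/2}}$, and for all $x\in\mathbb{R}$, $|F(x)|\le\frac{(\pi/2)R\cosh x}{(1+e^{-\pi\sinh x})^{\alpha/2}(1+e^{\pi\sinh x})^{\beta/2}}$. *)

theory Defs
  imports "HOL-Complex_Analysis.Complex_Analysis"
begin

definition strip :: "real \<Rightarrow> complex set" where
  "strip d = {z. \<bar>Im z\<bar> < d}"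

definition strip_minus :: "real \<Rightarrow> complex set" where
  "strip_minus d = {z \<in> strip d. Re z < 0}"

definition strip_plus :: "real \<Rightarrow> complex set" where
  "strip_plus d = {z \<in> strip d. Re z \<ge> 0}"

definition psi_DE :: "complex \<Rightarrow> complex" where
  "psi_DE t = sinh (complex_of_real (pi/2) * sinh t)"

definition LDE_class :: "real \<Rightarrow> real \<Rightarrow> real \<Rightarrow> real \<Rightarrow> real \<Rightarrow> (complex \<Rightarrow> complex) set" where
  "LDE_class L R \<alpha> \<beta> d = {F. F analytic_on strip d \<and>
     (\<forall>\<zeta>\<in>strip d. norm (F \<zeta>) \<le>
        (pi/2) * L * norm (cosh \<zeta>) /
        (norm (1 + exp (- complex_of_real pi * sinh \<zeta>)) powr (\<alpha>/2) *
         norm (1 + exp (complex_of_real pi * sinh \<zeta>)) powr (\<beta>/2))) \<and>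
     (\<forall>x::real. norm (F (complex_of_real x)) \<le>
        (pi/2) * R * cosh x /
        ((1 + exp (- pi * sinh x)) powr (\<alpha>/2) * (1 + exp (pi * sinh x)) powr (\<beta>/2)))}"

end

theory Submission
  imports Defs
begin



lemma cos_ge_quad: "cos (x::real) \<ge> 1 - x^2/2"
proof -
  have "cos x = 1 - 2 * sin (x/2)^2" using cos_double_sin[of "x/2"] by simp
  moreover have "sin (x/2)^2 \<le> (x/2)^2"
    using abs_sin_x_le_abs_x[of "x/2"] by (metis abs_ge_zero power2_abs power_mono)
  ultimately show ?thesis by (simp add: power_divide)
qed

lemma cosh_ge_quad: "cosh (x::real) \<ge> 1 + x^2/2"
proof -
  let ?f = "\<lambda>n. if even n then x ^ n /\<^sub>R fact n else 0"
  have s: "?f sums cosh x" by (rule cosh_converges)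
  have "sum ?f {..<3} \<le> suminf ?f"
    by (rule sum_le_suminf) (use s in \<open>auto simp: sums_iff\<close>)
  moreover have "sum ?f {..<3} = 1 + x^2/2" by (simp add: eval_nat_numeral)
  ultimately show ?thesis using s by (simp add: sums_iff)
qed

lemma jordan: assumes "0 \<le> t" "t \<le> 1" shows "t \<le> sin (pi/2 * t)"
proof (rule ccontr)
  assume "\<not> ?thesis"
  hence neg: "sin (pi/2*t) - t < 0" by simp
  define g where "g = (\<lambda>t. sin (pi/2*t) - t)"
  define g' where "g' = (\<lambda>t. pi/2 * cos (pi/2*t) - 1)"
  have der: "DERIV g x :> g' x" for x
    unfolding g_def g'_def by (auto intro!: derivative_eq_intros)
  have t0: "0 < t" using neg assms by (cases "t = 0") auto
  have t1: "t < 1" using neg assms by (cases "t = 1") auto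
  obtain z1 where z1: "0 < z1" "z1 < t" "g t - g 0 = (t - 0) * g' z1"
    using MVT2[OF t0 der] by blast
  obtain z2 where z2: "t < z2" "z2 < 1" "g 1 - g t = (1 - t) * g' z2"
    using MVT2[OF t1 der] by blast
  have "g' z1 < 0" using z1 neg t0 unfolding g_def
    by (simp add: mult_less_0_iff)
  moreover have "g' z2 > 0"
  proof -
    have "(1-t) * g' z2 > 0" using z2 neg unfolding g_def by simp
    thus ?thesis using t1 by (simp add: zero_less_mult_iff)
  qed
  moreover have "cos (pi/2*z2) \<le> cos (pi/2*z1)"
    using z1 z2 t0 by (intro cos_monotone_0_pi_le) auto
  ultimately show False unfolding g'_def
    using mult_left_mono[of "cos (pi/2*z2)" "cos (pi/2*z1)" "pi/2"] pi_gt_zero by linarith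
qed




lemma key_sin:
  fixes t q R :: real
  assumes t: "0 \<le> t" "t < 1" and q: "q \<ge> pi/2" and R: "R \<ge> 0" "R^2 = (1-t^2)*(q^2 - pi^2/4)"
  shows "sin (t*q)^2 \<le> (sin (pi/2*t) * cosh R)^2"
proof -
  define S where "S = sin (pi/2*t)"
  define C where "C = cos (pi/2*t)"
  define D where "D = q^2 - pi^2/4"
  have pi4: "pi < 4" using pi_less_4 .
  have S0: "S \<ge> 0" unfolding S_def using t by (intro sin_ge_zero) auto
  have pt: "pi*t \<ge> 0" "pi*t \<le> pi" using t pi_gt_zero by (auto simp: mult_left_le)
  have C0: "C \<ge> 0" unfolding C_def by (intro cos_ge_zero) (use pt pi_gt_zero in linarith)+
  have St: "t \<le> S" unfolding S_def using jordan[of t] t by simp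
  have q0: "q > 0" using q pi_gt_zero by linarith
  have "(pi/2)^2 \<le> q^2" by (rule power_mono) (use q pi_gt_zero in linarith)+
  hence D0: "D \<ge> 0" unfolding D_def by (simp add: power_divide)
  have coshR: "cosh R \<ge> 1 + R^2/2" by (rule cosh_ge_quad)
  have main: "\<bar>sin (t*q)\<bar> \<le> S * cosh R"
  proof (cases "t*q \<le> pi/2")
    case True
    define \<delta> where "\<delta> = t*(q - pi/2)"
    have d0: "\<delta> \<ge> 0" unfolding \<delta>_def using t q by simp
    have tq: "t*q = pi/2*t + \<delta>" unfolding \<delta>_def by (simp add: algebra_simps)
    have "t*q \<ge> 0" using t q0 by simp
    hence sin0: "sin (t*q) \<ge> 0" using True pi_gt_zero
      by (intro sin_ge_zero) linarith+
    have "sin (t*q) = S * cos \<delta> + C * sin \<delta>" unfolding tq S_def C_def by (simp add: sin_add)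
    also have "\<dots> \<le> S + C * \<delta>"
    proof -
      have "S * cos \<delta> \<le> S * 1" using cos_le_one[of \<delta>] S0 by (rule mult_left_mono)
      moreover have "C * sin \<delta> \<le> C * \<delta>" using C0 sin_x_le_x[OF d0] by (intro mult_left_mono)
      ultimately show ?thesis by linarith
    qed
    finally have s1: "sin (t*q) \<le> S + C*\<delta>" .
    have dpi: "\<delta> * pi \<le> t * D"
    proof -
      have "D = (q - pi/2)*(q + pi/2)" unfolding D_def by (simp add: power2_eq_square algebra_simps)
      moreover have "(q - pi/2) * pi \<le> (q - pi/2)*(q + pi/2)"
        using q by (intro mult_left_mono) auto
      ultimately show ?thesis unfolding \<delta>_def using t
        by (metis mult.assoc mult_left_mono)
    qed
    have Cle: "C \<le> pi/2*(1-t)"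
    proof -
      have "C = sin (pi/2 - pi/2*t)" unfolding C_def by (simp add: sin_diff)
      also have "\<dots> \<le> pi/2 - pi/2*t" using t by (intro sin_x_le_x) auto
      finally show ?thesis by (simp add: algebra_simps)
    qed
    have "C * \<delta> * pi \<le> C * (t*D)" using dpi C0 by (simp add: mult.assoc mult_left_mono)
    also have "\<dots> \<le> pi/2*(1-t) * (t*D)" using Cle t D0 by (intro mult_right_mono) auto
    also have "\<dots> \<le> pi/2*(1-t)*(1+t)*(S*D)"
    proof -
      have "(1-t)*(t*D) \<le> (1-t)*(S*D)" using St D0 t by (intro mult_left_mono mult_right_mono) auto
      also have "\<dots> \<le> (1-t)*(1+t)*(S*D)" using t S0 D0 by (simp add: mult_right_mono)
      finally show ?thesis using pi_gt_zero by (simp add: mult.assoc)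
    qed
    finally have "C * \<delta> * pi \<le> pi/2*(1-t)*(1+t)*(S*D)" .
    also have "pi/2*(1-t)*(1+t)*(S*D) = pi * (S*(R^2/2))"
    proof -
      have R2: "R^2 = (1-t^2)*D" using R(2) unfolding D_def by simp
      show ?thesis unfolding R2 by (simp add: power2_eq_square field_simps)
    qed
    finally have "pi * (C*\<delta>) \<le> pi * (S*(R^2/2))" by (simp add: mult.commute mult.left_commute)
    hence "C*\<delta> \<le> S*(R^2/2)" using pi_gt_zero by simp
    hence "sin (t*q) \<le> S * (1 + R^2/2)" using s1 by (simp add: algebra_simps)
    also have "\<dots> \<le> S * cosh R" using coshR S0 by (rule mult_left_mono)
    finally show ?thesis using sin0 by simp
  next
    case False
    hence tp: "t > 0" using t pi_gt_zero by (cases "t = 0") auto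
    have "q*t > pi/2" using False by (simp add: mult.commute)
    hence "(q*t)^2 > (pi/2)^2" using pi_gt_zero by (intro power_strict_mono) auto
    hence qt: "q^2*t^2 \<ge> pi^2/4" by (simp add: power_mult_distrib power_divide)
    have "D * t^2 = q^2*t^2 - pi^2/4*t^2" unfolding D_def by (simp add: algebra_simps)
    moreover have "pi^2/4*(1-t^2) = pi^2/4 - pi^2/4*t^2" by (simp add: right_diff_distrib)
    ultimately have Dt: "D * t^2 \<ge> pi^2/4*(1-t^2)" using qt by linarith
    have Rt: "R^2 * t^2 \<ge> pi^2/4*(1-t^2)^2"
    proof -
      have "R^2 * t^2 = (1-t^2) * (D*t^2)" using R(2) unfolding D_def by simp
      also have "\<dots> \<ge> (1-t^2)*(pi^2/4*(1-t^2))"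
        using Dt t by (intro mult_left_mono) (auto simp: power_le_one abs_square_le_1)
      finally show ?thesis by (simp add: power2_eq_square mult_ac)
    qed
    have "1 \<le> S * cosh R"
    proof (cases "t \<le> 1/2")
      case True
      have "(1-t^2)^2 \<ge> (3/4)^2"
      proof (rule power_mono)
        have "t^2 \<le> (1/2)^2" using True t by (intro power_mono) auto
        thus "3/4 \<le> 1 - t^2" by (simp add: power_divide)
      qed simp
      moreover have "pi^2 \<ge> 3^2" using pi_gt3 by (intro power_mono) auto
      ultimately have "pi^2*(1-t^2)^2 \<ge> 9*(9/16)"
        by (intro mult_mono) (auto simp: power_divide)
      hence "pi^2/4*(1-t^2)^2 \<ge> 9/4*(9/16)" by simp
      hence "R^2*t^2 \<ge> 81/64" using Rt by simp
      hence "t * R^2 \<ge> 2"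
      proof -
        assume a: "R^2*t^2 \<ge> 81/64"
        have "t*(t*R^2) \<ge> 81/64" using a by (simp add: power2_eq_square algebra_simps)
        moreover have "t*(t*R^2) \<le> (1/2)*(t*R^2)" using True tp by (intro mult_right_mono) auto
        ultimately show ?thesis by simp
      qed
      hence "1 \<le> t * (1 + R^2/2)" using tp by (simp add: algebra_simps)
      also have "\<dots> \<le> S * cosh R" using St coshR tp by (intro mult_mono) auto
      finally show ?thesis .
    next
      case False
      define e where "e = 1 - t"
      have e: "0 < e" "e < 1/2" using False t unfolding e_def by auto
      have "pi/2*e = pi/2 - pi/2*t" unfolding e_def by (simp add: right_diff_distrib)
      moreover have "S = cos (pi/2 - pi/2*t)" unfolding S_def using sin_cos_eq[of "pi/2*t"] by simp
      ultimately have "S = cos (pi/2*e)" by metis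
      hence Sge: "S \<ge> 1 - pi^2*e^2/8" using cos_ge_quad[of "pi/2*e"]
        by (simp add: power_mult_distrib power_divide)
      have "(1-t^2) \<ge> 2*e*t"
      proof -
        have "0 \<le> (1-t)^2" by simp
        thus ?thesis unfolding e_def by (simp add: power2_eq_square algebra_simps)
      qed
      hence "(1-t^2)^2 \<ge> (2*e*t)^2" using e tp by (intro power_mono) auto
      hence "pi^2/4*(2*e*t)^2 \<le> pi^2/4*(1-t^2)^2" by (rule mult_left_mono) simp
      hence "R^2 * t^2 \<ge> pi^2/4 * (2*e*t)^2" using Rt by linarith
      hence "R^2 * t^2 \<ge> (pi^2 * e^2) * t^2" by (simp add: power_mult_distrib)
      hence Rge: "R^2 \<ge> pi^2*e^2" using tp by simp
      define a where "a = pi^2*e^2"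
      have a0: "a \<ge> 0" unfolding a_def by simp
      have a4: "a \<le> 4"
      proof -
        have "pi^2 \<le> 4^2" using pi4 by (intro power_mono) auto
        moreover have "e^2 \<le> (1/2)^2" using e by (intro power_mono) auto
        hence "e^2 \<le> 1/4" by (simp add: power_divide)
        ultimately have "pi^2*e^2 \<le> 16*(1/4)" by (intro mult_mono) auto
        thus ?thesis unfolding a_def by simp
      qed
      have c1: "cosh R \<ge> 1 + a/2" using coshR Rge unfolding a_def by simp
      have s1: "S \<ge> 1 - a/8" using Sge unfolding a_def by simp
      have "(1 - a/8)*(1 + a/2) \<ge> 1"
      proof -
        have "(1 - a/8)*(1 + a/2) = 1 + a*(3/8 - a/16)" by (simp add: field_simps)
        moreover have "a*(3/8 - a/16) \<ge> 0" using a0 a4 by simp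
        ultimately show ?thesis by simp
      qed
      also have "\<dots> \<le> S * cosh R" using c1 s1 a4 a0 by (intro mult_mono) auto
      finally show ?thesis .
    qed
    moreover have "\<bar>sin (t*q)\<bar> \<le> 1" by simp
    ultimately show ?thesis by linarith
  qed
  have "sin (t*q)^2 = \<bar>sin (t*q)\<bar>^2" by simp
  also have "\<dots> \<le> (S * cosh R)^2" using main by (intro power_mono) auto
  finally show ?thesis unfolding S_def .
qed




lemma absA:
  fixes K \<alpha> \<beta> h P Q C fz c0 :: real
  assumes K: "K > 0" and ab: "\<alpha> > 0" "\<beta> > 0" and h: "h > 0" and P: "P > 0" and Q: "Q > 0"
    and PQ: "P * Q = 4 * h^2" and C: "0 < C" "C \<le> 1" "C \<le> Q" "Q \<le> 2"
    and fz: "0 \<le> fz" "fz \<le> K * (h^2) powr (-(\<alpha>+1)/2)" and c0: "c0 \<ge> 0"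
  shows "fz * (h * (pi/2 * c0)) \<le>
    (pi/2) * (2 powr (max \<alpha> \<beta>) * K / C powr ((max \<alpha> \<beta> - min \<alpha> \<beta>)/2)) * c0 /
      (P powr (\<alpha>/2) * Q powr (\<beta>/2))"
proof -
  define L where "L = 2 powr (max \<alpha> \<beta>) * K / C powr ((max \<alpha> \<beta> - min \<alpha> \<beta>)/2)"
  have h2: "(h^2) powr r = h powr (2*r)" for r
  proof -
    have "h^2 = h powr 2" using h powr_realpow[of h 2] by simp
    thus ?thesis by (simp add: powr_powr)
  qed
  have fzh: "fz * h \<le> K * h powr (-\<alpha>)"
  proof -
    have ee: "2 * (-(\<alpha>+1)/2) = -(\<alpha>+1)" by simp
    have e1: "(h^2) powr (-(\<alpha>+1)/2) = h powr (-(\<alpha>+1))" by (simp only: h2 ee)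
    have "fz * h \<le> K * h powr (-(\<alpha>+1)) * h" using fz h unfolding e1 by (simp add: mult_right_mono)
    also have "\<dots> = K * (h powr (-(\<alpha>+1)) * h powr 1)" using h by (simp add: mult.assoc)
    also have "\<dots> = K * h powr (-(\<alpha>+1) + 1)" by (subst powr_add) (rule refl)
    also have "\<dots> = K * h powr (-\<alpha>)" by simp
    finally show ?thesis .
  qed
  have hP: "h powr (-\<alpha>) = P powr (-\<alpha>/2) * Q powr (-\<alpha>/2) * 2 powr \<alpha>"
  proof -
    have ee: "2 * (-\<alpha>/2) = -\<alpha>" by simp
    have "h powr (-\<alpha>) = (h^2) powr (-\<alpha>/2)" by (simp only: h2 ee)
    also have "h^2 = P * Q / 4" using PQ by simp
    also have "(P * Q / 4) powr (-\<alpha>/2) = P powr (-\<alpha>/2) * Q powr (-\<alpha>/2) * (1/4) powr (-\<alpha>/2)"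
      using P Q by (simp add: powr_mult powr_divide)
    also have "(1/4::real) powr (-\<alpha>/2) = 2 powr \<alpha>"
    proof -
      have "(1/4::real) powr (-\<alpha>/2) = 4 powr (\<alpha>/2)" by (simp add: powr_minus_divide powr_divide)
      also have "(4::real) powr (\<alpha>/2) = (2 powr 2) powr (\<alpha>/2)" by simp
      also have "\<dots> = (2::real) powr \<alpha>" by (simp only: powr_powr) simp
      finally show ?thesis .
    qed
    finally show ?thesis .
  qed
  have core: "K * h powr (-\<alpha>) * (P powr (\<alpha>/2) * Q powr (\<beta>/2)) = K * 2 powr \<alpha> * Q powr ((\<beta>-\<alpha>)/2)"
  proof -
    have "P powr (-\<alpha>/2) * P powr (\<alpha>/2) = 1" using P by (simp add: powr_add [symmetric])
    moreover have "Q powr (-\<alpha>/2) * Q powr (\<beta>/2) = Q powr ((\<beta>-\<alpha>)/2)"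
      using Q by (simp add: powr_add [symmetric] diff_divide_distrib)
    ultimately show ?thesis unfolding hP by (simp add: mult_ac)
  qed
  have Cp: "C powr r > 0" for r using C by simp
  have bound: "K * 2 powr \<alpha> * Q powr ((\<beta>-\<alpha>)/2) \<le> L"
  proof (cases "\<alpha> \<le> \<beta>")
    case True
    have "Q powr ((\<beta>-\<alpha>)/2) \<le> 2 powr ((\<beta>-\<alpha>)/2)" using True Q C by (intro powr_mono2) auto
    hence "K * 2 powr \<alpha> * Q powr ((\<beta>-\<alpha>)/2) \<le> K * 2 powr \<alpha> * 2 powr ((\<beta>-\<alpha>)/2)"
      using K by (intro mult_left_mono) auto
    also have "\<dots> = K * 2 powr (\<alpha> + (\<beta>-\<alpha>)/2)" by (simp add: powr_add mult.assoc)
    also have "\<dots> \<le> K * 2 powr \<beta>"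
    proof -
      have ab2: "\<alpha> + (\<beta>-\<alpha>)/2 \<le> \<beta>" using True by (simp add: field_simps)
      have "(2::real) powr (\<alpha> + (\<beta>-\<alpha>)/2) \<le> 2 powr \<beta>" by (rule powr_mono[OF ab2]) simp
      thus ?thesis using K by (intro mult_left_mono) auto
    qed
    also have "\<dots> \<le> K * 2 powr \<beta> / C powr ((\<beta> - \<alpha>)/2)"
    proof -
      have "C powr ((\<beta> - \<alpha>)/2) \<le> 1" using C True by (intro powr_le1) auto
      thus ?thesis using Cp K by (simp add: le_divide_eq mult_left_le)
    qed
    finally show ?thesis unfolding L_def using True by (simp add: max_def min_def mult.commute)
  next
    case False
    have "Q powr ((\<beta>-\<alpha>)/2) \<le> C powr ((\<beta>-\<alpha>)/2)" using False Q C by (intro powr_mono2') auto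
    also have "\<dots> = C powr (- ((\<alpha>-\<beta>)/2))" by (simp add: minus_divide_left)
    also have "\<dots> = 1 / C powr ((\<alpha>-\<beta>)/2)" by (rule powr_minus_divide)
    finally have "K * 2 powr \<alpha> * Q powr ((\<beta>-\<alpha>)/2) \<le> K * 2 powr \<alpha> * (1 / C powr ((\<alpha>-\<beta>)/2))"
      using K by (intro mult_left_mono) auto
    thus ?thesis unfolding L_def using False by (simp add: max_def min_def mult.commute)
  qed
  have den: "P powr (\<alpha>/2) * Q powr (\<beta>/2) > 0" using P Q by simp
  have "fz * h * (P powr (\<alpha>/2) * Q powr (\<beta>/2)) \<le> K * h powr (-\<alpha>) * (P powr (\<alpha>/2) * Q powr (\<beta>/2))"
    using fzh den by (intro mult_right_mono) auto
  hence "fz * h * (P powr (\<alpha>/2) * Q powr (\<beta>/2)) \<le> L" using core bound by linarith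
  hence "fz * h \<le> L / (P powr (\<alpha>/2) * Q powr (\<beta>/2))" using den by (simp add: le_divide_eq)
  hence "(pi/2*c0) * (fz * h) \<le> (pi/2*c0) * (L / (P powr (\<alpha>/2) * Q powr (\<beta>/2)))"
    using c0 by (intro mult_left_mono) auto
  thus ?thesis unfolding L_def by (simp add: mult_ac)
qed




lemma sinh_Re: "Re (sinh z) = sinh (Re z) * cos (Im z)"
  by (simp add: sinh_field_def Re_exp Im_exp field_simps)

lemma sinh_Im: "Im (sinh z) = cosh (Re z) * sin (Im z)"
  by (simp add: sinh_field_def cosh_field_def Re_exp Im_exp field_simps)

lemma alg1: "(1::real) + 2 * u * (1 - 2 * v) + u^2 = (1 + u)^2 - 4 * u * v"
  by (simp add: power2_eq_square algebra_simps)

lemma norm_1exp: "norm (1 + exp z)^2 = (1 + exp (Re z))^2 - 4 * exp (Re z) * sin (Im z / 2)^2"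
proof -
  have c: "cos (Im z) = 1 - 2 * sin (Im z / 2)^2" using cos_double_sin[of "Im z/2"] by simp
  have e1: "norm (1 + exp z)^2 = (1 + exp (Re z) * cos (Im z))^2 + (exp (Re z) * sin (Im z))^2"
    by (simp add: cmod_power2 Re_exp Im_exp)
  have e2: "(1 + exp (Re z) * cos (Im z))^2 + (exp (Re z) * sin (Im z))^2 = 1 + 2 * exp (Re z) * cos (Im z) + ((exp (Re z) * cos (Im z))^2 + (exp (Re z) * sin (Im z))^2)"
    by (simp add: power2_eq_square algebra_simps)
  have e3: "(exp (Re z) * cos (Im z))^2 + (exp (Re z) * sin (Im z))^2 = exp (Re z)^2"
  proof -
    have "(exp (Re z) * cos (Im z))^2 + (exp (Re z) * sin (Im z))^2 = exp (Re z)^2 * (cos (Im z)^2 + sin (Im z)^2)"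
      by (simp only: power_mult_distrib distrib_left)
    thus ?thesis by simp
  qed
  have e4: "1 + 2 * exp (Re z) * cos (Im z) + exp (Re z)^2 = (1 + exp (Re z))^2 - 4 * exp (Re z) * sin (Im z / 2)^2"
    unfolding c by (rule alg1)
  show ?thesis using e1 e2 e3 e4 by linarith
qed

lemma cosh_sq: "4 * exp a * cosh (a/2)^2 = (1 + exp (a::real))^2"
proof -
  have e: "exp a = exp (a/2) * exp (a/2)" by (simp add: exp_add [symmetric])
  show ?thesis unfolding cosh_field_def e by (simp add: exp_minus power2_eq_square field_simps)
qed

lemma low_bound:
  fixes z :: complex
  assumes y: "\<bar>Im z\<bar> < pi/2"
  shows "norm (1 + exp (complex_of_real pi * sinh z)) \<ge> cos (pi/2 * \<bar>sin (Im z)\<bar>)"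
proof -
  define x where "x = Re z"
  define y where "y = Im z"
  define a where "a = pi * sinh x * cos y"
  define b where "b = pi * cosh x * sin y"
  define t where "t = \<bar>sin y\<bar>"
  define q where "q = pi/2 * cosh x"
  define R where "R = pi/2 * \<bar>sinh x\<bar> * cos y"
  have cy: "cos y > 0" unfolding y_def using y by (intro cos_gt_zero_pi) auto
  have Rea: "Re (complex_of_real pi * sinh z) = a" unfolding a_def x_def y_def by (simp add: sinh_Re)
  have Imb: "Im (complex_of_real pi * sinh z) = b" unfolding b_def x_def y_def by (simp add: sinh_Im)
  have t: "0 \<le> t" "t < 1"
  proof -
    show "0 \<le> t" unfolding t_def by simp
    have "sin y ^2 < 1" using cy sin_squared_eq[of y] by (smt (verit) zero_less_power)
    thus "t < 1" unfolding t_def by (metis abs_square_less_1)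
  qed
  have q: "q \<ge> pi/2" unfolding q_def using cosh_real_ge_1[of x] pi_gt_zero by simp
  have R0: "R \<ge> 0" unfolding R_def using cy pi_gt_zero by simp
  have R2: "R^2 = (1-t^2)*(q^2 - pi^2/4)"
  proof -
    have "1 - t^2 = cos y ^2" unfolding t_def by (simp add: cos_squared_eq)
    moreover have "q^2 - pi^2/4 = pi^2/4 * sinh x ^2"
      unfolding q_def by (simp add: power_mult_distrib power_divide cosh_square_eq algebra_simps)
    ultimately show ?thesis unfolding R_def by (simp add: power_mult_distrib power_divide)
  qed
  have key: "sin (t*q)^2 \<le> (sin (pi/2*t) * cosh R)^2" by (rule key_sin[OF t q R0 R2])
  have sb: "sin (b/2)^2 = sin (t*q)^2"
  proof -
    have "b/2 = sin y * q" unfolding b_def q_def by simp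
    moreover have "sin (sin y * q)^2 = sin (t*q)^2"
      unfolding t_def by (cases "sin y \<ge> 0") (auto simp: abs_if)
    ultimately show ?thesis by simp
  qed
  have ca: "cosh (a/2)^2 = cosh R^2"
  proof -
    have "a/2 = R \<or> a/2 = -R" unfolding a_def R_def by (auto simp: abs_if)
    thus ?thesis by auto
  qed
  define S where "S = sin (pi/2*t)"
  define Cy where "Cy = cos (pi/2*t)"
  have "norm (1 + exp (complex_of_real pi * sinh z))^2 = (1 + exp a)^2 - 4 * exp a * sin (b/2)^2"
    using norm_1exp[of "complex_of_real pi * sinh z"] unfolding Rea Imb .
  also have "\<dots> \<ge> (1 + exp a)^2 - 4 * exp a * (S^2 * cosh (a/2)^2)"
  proof -
    have "sin (b/2)^2 \<le> S^2 * cosh (a/2)^2" using key unfolding sb ca S_def by (simp add: power_mult_distrib)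
    thus ?thesis by (simp add: mult_left_mono)
  qed
  moreover have "4 * exp a * (S^2 * cosh (a/2)^2) = S^2 * (4 * exp a * cosh (a/2)^2)" by (simp add: mult_ac)
  moreover have "(1 + exp a)^2 * (1 - S^2) = (1 + exp a)^2 - S^2 * (1 + exp a)^2" by (simp add: algebra_simps)
  ultimately have "norm (1 + exp (complex_of_real pi * sinh z))^2 \<ge> (1 + exp a)^2 * (1 - S^2)"
    unfolding cosh_sq by linarith
  moreover have "(1 + exp a)^2 * (1 - S^2) \<ge> 1 * (1 - S^2)"
  proof (rule mult_right_mono)
    have "1 * 1 \<le> (1 + exp a) * (1 + exp a)" using exp_gt_zero[of a] by (intro mult_mono) auto
    thus "1 \<le> (1 + exp a)^2" by (simp add: power2_eq_square)
    show "0 \<le> 1 - S^2" unfolding S_def by (simp add: sin_squared_eq)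
  qed
  moreover have "1 - S^2 = Cy^2" unfolding S_def Cy_def by (simp add: sin_squared_eq)
  ultimately have "Cy^2 \<le> norm (1 + exp (complex_of_real pi * sinh z))^2" by simp
  hence "Cy \<le> norm (1 + exp (complex_of_real pi * sinh z))"
    by (meson abs_le_square_iff norm_ge_zero abs_ge_self order_trans abs_of_nonneg power2_le_imp_le)
  thus ?thesis unfolding Cy_def t_def y_def .
qed




lemma absB:
  fixes K \<alpha> \<beta> h P Q C fz c0 :: real
  assumes K: "K > 0" and ab: "\<alpha> > 0" "\<beta> > 0" and h: "h > 0" and P: "P > 0" and Q: "Q > 0"
    and PQ: "P * Q = 4 * h^2" and C: "0 < C" "C \<le> 1" "C \<le> P" "P \<le> 2"
    and fz: "0 \<le> fz" "fz \<le> K * (h^2) powr (-(\<beta>+1)/2)" and c0: "c0 \<ge> 0"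
  shows "fz * (h * (pi/2 * c0)) \<le>
    (pi/2) * (2 powr (max \<alpha> \<beta>) * K / C powr ((max \<alpha> \<beta> - min \<alpha> \<beta>)/2)) * c0 /
      (P powr (\<alpha>/2) * Q powr (\<beta>/2))"
proof -
  have QP: "Q * P = 4 * h^2" using PQ by (simp only: mult.commute)
  have "fz * (h * (pi/2 * c0)) \<le>
    (pi/2) * (2 powr (max \<beta> \<alpha>) * K / C powr ((max \<beta> \<alpha> - min \<beta> \<alpha>)/2)) * c0 /
      (Q powr (\<beta>/2) * P powr (\<alpha>/2))"
    by (rule absA[OF K ab(2) ab(1) h Q P QP C fz c0])
  thus ?thesis by (simp only: max.commute[of \<beta> \<alpha>] min.commute[of \<beta> \<alpha>] mult.commute[of "Q powr (\<beta>/2)"])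
qed

lemma psi_deriv: "deriv psi_DE z = cosh (complex_of_real (pi/2) * sinh z) * (complex_of_real (pi/2) * cosh z)"
proof -
  have "(psi_DE has_field_derivative cosh (complex_of_real (pi/2) * sinh z) * (complex_of_real (pi/2) * cosh z)) (at z)"
    unfolding psi_DE_def by (auto intro!: derivative_eq_intros)
  thus ?thesis by (rule DERIV_imp_deriv)
qed

lemma PQ_alg: assumes "(e::complex) \<noteq> 0" shows "(1 + inverse (e*e)) * (1 + e*e) = 4 * ((e + inverse e)/2)^2"
proof -
  define i where "i = inverse e"
  have ei: "e * i = 1" using assms unfolding i_def by simp
  have ii: "inverse (e*e) = i * i" unfolding i_def by (simp add: inverse_mult_distrib)
  have "(1 + i*i) * (1 + e*e) = 1 + e*e + i*i + (e*i)*(e*i)" by (simp add: algebra_simps)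
  also have "\<dots> = 2 + e*e + i*i" using ei by simp
  also have "\<dots> = e*e + 2*(e*i) + i*i" using ei by simp
  also have "\<dots> = (e+i)^2" by (simp add: power2_eq_square algebra_simps)
  also have "\<dots> = 4 * ((e+i)/2)^2" by (simp add: power_divide)
  finally show ?thesis unfolding ii i_def .
qed

lemma PQ_id: "(1 + exp (- (2*W))) * (1 + exp (2*W)) = 4 * cosh (W::complex) ^ 2"
proof -
  have E: "exp W \<noteq> 0" by simp
  have a: "exp (2*W) = exp W * exp W" by (metis exp_add mult_2)
  have b: "exp (-(2*W)) = inverse (exp W * exp W)" by (simp only: exp_minus a)
  have c: "exp (-W) = inverse (exp W)" by (simp only: exp_minus)
  show ?thesis unfolding a b cosh_field_def c by (rule PQ_alg[OF E])
qed

lemma exp_neg_of_real: "exp (- complex_of_real x) = complex_of_real (exp (-x))"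
  by (metis exp_of_real of_real_minus)

lemma cosh_of_real': "cosh (complex_of_real x) = complex_of_real (cosh x)"
  unfolding cosh_field_def[of "complex_of_real x"] cosh_field_def[of x] exp_neg_of_real exp_of_real
  by simp

lemma sinh_of_real': "sinh (complex_of_real x) = complex_of_real (sinh x)"
  unfolding sinh_field_def[of "complex_of_real x"] sinh_field_def[of x] exp_neg_of_real exp_of_real
  by simp


lemma point:
  fixes f :: "complex \<Rightarrow> complex" and d K \<alpha> \<beta> C :: real
  assumes d: "d < pi/2" and K: "0 < K" and ab: "0 < \<alpha>" "0 < \<beta>"
    and hm: "\<forall>z\<in>psi_DE ` strip_minus d. norm (f z) \<le> K * norm (1 + z^2) powr (-(\<alpha>+1)/2)"
    and hp: "\<forall>z\<in>psi_DE ` strip_plus d. norm (f z) \<le> K * norm (1 + z^2) powr (-(\<beta>+1)/2)"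
    and z: "\<zeta> \<in> strip d"
    and C: "0 < C" "C \<le> 1" "C \<le> norm (1 + exp (- complex_of_real pi * sinh \<zeta>))"
           "C \<le> norm (1 + exp (complex_of_real pi * sinh \<zeta>))"
  shows "norm (f (psi_DE \<zeta>) * deriv psi_DE \<zeta>) \<le>
    (pi/2) * (2 powr (max \<alpha> \<beta>) * K / C powr ((max \<alpha> \<beta> - min \<alpha> \<beta>)/2)) * norm (cosh \<zeta>) /
      (norm (1 + exp (- complex_of_real pi * sinh \<zeta>)) powr (\<alpha>/2) *
       norm (1 + exp (complex_of_real pi * sinh \<zeta>)) powr (\<beta>/2))"
proof -
  define W where "W = complex_of_real (pi/2) * sinh \<zeta>"
  define h where "h = norm (cosh W)"
  define P where "P = norm (1 + exp (- complex_of_real pi * sinh \<zeta>))"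
  define Q where "Q = norm (1 + exp (complex_of_real pi * sinh \<zeta>))"
  have W2: "complex_of_real pi * sinh \<zeta> = 2*W" unfolding W_def by simp
  have mW2: "- complex_of_real pi * sinh \<zeta> = -(2*W)" using W2 by simp
  have PQ: "P * Q = 4 * h^2"
  proof -
    have "P * Q = norm ((1 + exp (-(2*W))) * (1 + exp (2*W)))"
      unfolding P_def Q_def mW2 W2 by (simp add: norm_mult)
    also have "\<dots> = norm (4 * cosh W ^ 2)" by (simp only: PQ_id)
    also have "\<dots> = 4 * h^2" unfolding h_def by (simp add: norm_mult norm_power)
    finally show ?thesis .
  qed
  have P0: "P > 0" and Q0: "Q > 0" using C unfolding P_def Q_def by linarith+
  have h0: "h > 0"
  proof -
    have "h \<ge> 0" unfolding h_def by simp
    moreover have "h \<noteq> 0" using PQ P0 Q0 by auto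
    ultimately show ?thesis by simp
  qed
  have psi: "psi_DE \<zeta> = sinh W" unfolding psi_DE_def W_def ..
  have n1: "norm (1 + (psi_DE \<zeta>)^2) = h^2"
  proof -
    have "1 + (psi_DE \<zeta>)^2 = cosh W ^ 2" unfolding psi by (simp add: cosh_square_eq)
    thus ?thesis unfolding h_def by (simp add: norm_power)
  qed
  have nF: "norm (f (psi_DE \<zeta>) * deriv psi_DE \<zeta>) = norm (f (psi_DE \<zeta>)) * (h * (pi/2 * norm (cosh \<zeta>)))"
    unfolding psi_deriv h_def W_def by (simp add: norm_mult)
  have Iz: "\<bar>Im \<zeta>\<bar> < pi/2" using z d unfolding strip_def by simp
  have cy: "cos (Im \<zeta>) > 0" using Iz by (intro cos_gt_zero_pi) auto
  have ReW: "Re (complex_of_real pi * sinh \<zeta>) = pi * (sinh (Re \<zeta>) * cos (Im \<zeta>))"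
    using sinh_Re[of \<zeta>] by simp
  have ReW': "Re (- complex_of_real pi * sinh \<zeta>) = - (pi * (sinh (Re \<zeta>) * cos (Im \<zeta>)))"
    using ReW by simp
  have c0: "norm (cosh \<zeta>) \<ge> 0" by simp
  show ?thesis
  proof (cases "Re \<zeta> < 0")
    case True
    have mem: "psi_DE \<zeta> \<in> psi_DE ` strip_minus d" using z True unfolding strip_minus_def by auto
    have fz: "norm (f (psi_DE \<zeta>)) \<le> K * (h^2) powr (-(\<alpha>+1)/2)" using hm mem n1 by auto
    have Q2: "Q \<le> 2"
    proof -
      have "Q \<le> norm (1::complex) + norm (exp (complex_of_real pi * sinh \<zeta>))"
        unfolding Q_def by (rule norm_triangle_ineq)
      also have "\<dots> = 1 + exp (pi * (sinh (Re \<zeta>) * cos (Im \<zeta>)))" by (simp only: norm_exp_eq_Re ReW norm_one)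
      also have "\<dots> \<le> 1 + 1"
      proof -
        have "sinh (Re \<zeta>) * cos (Im \<zeta>) \<le> 0" using True cy by (simp add: mult_nonpos_nonneg)
        hence "pi * (sinh (Re \<zeta>) * cos (Im \<zeta>)) \<le> 0" using pi_gt_zero by (simp add: mult_nonneg_nonpos)
        thus ?thesis by simp
      qed
      finally show ?thesis by simp
    qed
    have CQ: "C \<le> Q" using C(4) unfolding Q_def .
    have fz0: "norm (f (psi_DE \<zeta>)) \<ge> 0" by simp
    note r = absA[OF K ab h0 P0 Q0 PQ C(1,2) CQ Q2 fz0 fz c0]
    show ?thesis unfolding nF using r unfolding P_def Q_def .
  next
    case False
    have mem: "psi_DE \<zeta> \<in> psi_DE ` strip_plus d" using z False unfolding strip_plus_def by auto
    have fz: "norm (f (psi_DE \<zeta>)) \<le> K * (h^2) powr (-(\<beta>+1)/2)" using hp mem n1 by auto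
    have P2: "P \<le> 2"
    proof -
      have "P \<le> norm (1::complex) + norm (exp (- complex_of_real pi * sinh \<zeta>))"
        unfolding P_def by (rule norm_triangle_ineq)
      also have "\<dots> = 1 + exp (- (pi * (sinh (Re \<zeta>) * cos (Im \<zeta>))))" by (simp only: norm_exp_eq_Re ReW' norm_one)
      also have "\<dots> \<le> 1 + 1"
      proof -
        have "sinh (Re \<zeta>) * cos (Im \<zeta>) \<ge> 0" using False cy by simp
        hence "pi * (sinh (Re \<zeta>) * cos (Im \<zeta>)) \<ge> 0" using pi_gt_zero by simp
        thus ?thesis by simp
      qed
      finally show ?thesis by simp
    qed
    have CP: "C \<le> P" using C(3) unfolding P_def .
    have fz0: "norm (f (psi_DE \<zeta>)) \<ge> 0" by simp
    note r = absB[OF K ab h0 P0 Q0 PQ C(1,2) CP P2 fz0 fz c0]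
    show ?thesis unfolding nF using r unfolding P_def Q_def .
  qed
qed

lemma cos_strip_bound:
  fixes d :: real and \<zeta> :: complex
  assumes d: "0 < d" "d < pi/2" and y: "\<bar>Im \<zeta>\<bar> < d"
  shows "cos (pi/2 * sin d) \<le> cos (pi/2 * \<bar>sin (Im \<zeta>)\<bar>)"
proof -
  have yp: "\<bar>Im \<zeta>\<bar> \<le> pi" using y d by simp
  have "\<bar>sin (Im \<zeta>)\<bar> = sin \<bar>Im \<zeta>\<bar>"
  proof (cases "Im \<zeta> \<ge> 0")
    case True
    hence "sin (Im \<zeta>) \<ge> 0" using yp by (intro sin_ge_zero) auto
    thus ?thesis using True by simp
  next
    case False
    hence "sin (- Im \<zeta>) \<ge> 0" using yp by (intro sin_ge_zero) auto
    thus ?thesis using False by simp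
  qed
  also have "\<dots> \<le> sin d" using y d by (subst sin_mono_le_eq) auto
  finally have s: "\<bar>sin (Im \<zeta>)\<bar> \<le> sin d" .
  have sd: "sin d \<le> 1" by simp
  have "pi/2 * \<bar>sin (Im \<zeta>)\<bar> \<le> pi/2 * sin d" using s pi_gt_zero by simp
  moreover have "pi/2 * sin d \<le> pi"
  proof -
    have "pi/2 * sin d \<le> pi/2 * 1" by (rule mult_left_mono) (use sd pi_gt_zero in auto)
    thus ?thesis using pi_gt_zero by linarith
  qed
  ultimately show ?thesis using pi_gt_zero
    by (subst cos_mono_le_eq) auto
qed

theorem lemma9:
  fixes f :: "complex \<Rightarrow> complex" and d K \<alpha> \<beta> :: real
  assumes "0 < d" and "d < pi/2"
    and "f analytic_on (psi_DE ` strip d)"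
    and "0 < K" and "0 < \<alpha>" and "0 < \<beta>"
    and "\<forall>z\<in>psi_DE ` strip_minus d. norm (f z) \<le> K * norm (1 + z^2) powr (-(\<alpha>+1)/2)"
    and "\<forall>z\<in>psi_DE ` strip_plus d. norm (f z) \<le> K * norm (1 + z^2) powr (-(\<beta>+1)/2)"
  shows "(\<lambda>\<zeta>. f (psi_DE \<zeta>) * deriv psi_DE \<zeta>) \<in>
    LDE_class (2 powr (max \<alpha> \<beta>) * K / (cos (pi/2 * sin d)) powr ((max \<alpha> \<beta> - min \<alpha> \<beta>)/2))
              (2 powr (max \<alpha> \<beta>) * K) \<alpha> \<beta> d"
proof -
  note d = assms(1,2) and fa = assms(3) and K = assms(4) and ab = assms(5,6)
    and hm = assms(7) and hp = assms(8)
  define C0 where "C0 = cos (pi/2 * sin d)"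
  have C0: "0 < C0" "C0 \<le> 1"
  proof -
    have "sin d > 0" using d by (intro sin_gt_zero) auto
    moreover have "sin d < 1" using sin_mono_less_eq[of d "pi/2"] d by simp
    ultimately have u1: "pi/2 * sin d < pi/2" and u2: "pi/2 * sin d > 0" using pi_gt_zero by auto
    show "0 < C0" unfolding C0_def by (intro cos_gt_zero_pi) (use u1 u2 pi_gt_zero in linarith)+
    show "C0 \<le> 1" unfolding C0_def by simp
  qed
  have psi_an: "psi_DE analytic_on S" for S
    unfolding psi_DE_def by (intro analytic_intros)
  have dpsi: "deriv psi_DE = (\<lambda>z. cosh (complex_of_real (pi/2) * sinh z) * (complex_of_real (pi/2) * cosh z))"
    by (rule ext) (rule psi_deriv)
  have an: "(\<lambda>\<zeta>. f (psi_DE \<zeta>) * deriv psi_DE \<zeta>) analytic_on strip d"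
  proof -
    have "(f \<circ> psi_DE) analytic_on strip d"
      by (rule analytic_on_compose[OF psi_an fa])
    hence "(\<lambda>\<zeta>. f (psi_DE \<zeta>)) analytic_on strip d" by (simp add: o_def)
    moreover have "(\<lambda>\<zeta>. deriv psi_DE \<zeta>) analytic_on strip d" unfolding dpsi by (intro analytic_intros)
    ultimately show ?thesis by (rule analytic_on_mult)
  qed
  have cpx: "norm (f (psi_DE \<zeta>) * deriv psi_DE \<zeta>) \<le>
        (pi/2) * (2 powr (max \<alpha> \<beta>) * K / C0 powr ((max \<alpha> \<beta> - min \<alpha> \<beta>)/2)) * norm (cosh \<zeta>) /
        (norm (1 + exp (- complex_of_real pi * sinh \<zeta>)) powr (\<alpha>/2) *
         norm (1 + exp (complex_of_real pi * sinh \<zeta>)) powr (\<beta>/2))" if z: "\<zeta> \<in> strip d" for \<zeta>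
  proof (rule point[OF d(2) K ab hm hp z C0])
    have y: "\<bar>Im \<zeta>\<bar> < d" using z unfolding strip_def by simp
    have y2: "\<bar>Im \<zeta>\<bar> < pi/2" using y d by simp
    have cb: "C0 \<le> cos (pi/2 * \<bar>sin (Im \<zeta>)\<bar>)" unfolding C0_def by (rule cos_strip_bound[OF d y])
    show "C0 \<le> norm (1 + exp (complex_of_real pi * sinh \<zeta>))"
      using cb low_bound[OF y2] by linarith
    have y3: "\<bar>Im (-\<zeta>)\<bar> < pi/2" using y2 by simp
    have "cos (pi/2 * \<bar>sin (Im (-\<zeta>))\<bar>) \<le> norm (1 + exp (complex_of_real pi * sinh (-\<zeta>)))"
      by (rule low_bound[OF y3])
    moreover have "complex_of_real pi * sinh (-\<zeta>) = - complex_of_real pi * sinh \<zeta>" by simp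
    moreover have "\<bar>sin (Im (-\<zeta>))\<bar> = \<bar>sin (Im \<zeta>)\<bar>" by simp
    ultimately show "C0 \<le> norm (1 + exp (- complex_of_real pi * sinh \<zeta>))" using cb by simp
  qed
  have rl: "norm (f (psi_DE (complex_of_real x)) * deriv psi_DE (complex_of_real x)) \<le>
        (pi/2) * (2 powr (max \<alpha> \<beta>) * K) * cosh x /
        ((1 + exp (- pi * sinh x)) powr (\<alpha>/2) * (1 + exp (pi * sinh x)) powr (\<beta>/2))" for x
  proof -
    have z: "complex_of_real x \<in> strip d" using d unfolding strip_def by simp
    have e1: "1 + exp (- complex_of_real pi * sinh (complex_of_real x)) = complex_of_real (1 + exp (- pi * sinh x))"
    proof -
      have "- complex_of_real pi * sinh (complex_of_real x) = complex_of_real (- pi * sinh x)"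
        by (simp add: sinh_of_real')
      thus ?thesis by (simp only: exp_of_real of_real_add of_real_1)
    qed
    have e2: "1 + exp (complex_of_real pi * sinh (complex_of_real x)) = complex_of_real (1 + exp (pi * sinh x))"
    proof -
      have "complex_of_real pi * sinh (complex_of_real x) = complex_of_real (pi * sinh x)"
        by (simp add: sinh_of_real')
      thus ?thesis by (simp only: exp_of_real of_real_add of_real_1)
    qed
    have n1: "norm (1 + exp (- complex_of_real pi * sinh (complex_of_real x))) = 1 + exp (- pi * sinh x)"
      unfolding e1 norm_of_real by (simp add: add_pos_pos)
    have n2: "norm (1 + exp (complex_of_real pi * sinh (complex_of_real x))) = 1 + exp (pi * sinh x)"
      unfolding e2 norm_of_real by (simp add: add_pos_pos)
    have g1: "1 \<le> norm (1 + exp (- complex_of_real pi * sinh (complex_of_real x)))"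
      unfolding n1 by simp
    have g2: "1 \<le> norm (1 + exp (complex_of_real pi * sinh (complex_of_real x)))"
      unfolding n2 by simp
    have n3: "norm (cosh (complex_of_real x)) = cosh x" unfolding cosh_of_real' norm_of_real by simp
    have "norm (f (psi_DE (complex_of_real x)) * deriv psi_DE (complex_of_real x)) \<le>
        (pi/2) * (2 powr (max \<alpha> \<beta>) * K / 1 powr ((max \<alpha> \<beta> - min \<alpha> \<beta>)/2)) * norm (cosh (complex_of_real x)) /
        (norm (1 + exp (- complex_of_real pi * sinh (complex_of_real x))) powr (\<alpha>/2) *
         norm (1 + exp (complex_of_real pi * sinh (complex_of_real x))) powr (\<beta>/2))"
      by (rule point[OF d(2) K ab hm hp z _ _ g1 g2]) simp_all
    thus ?thesis unfolding n1 n2 n3 by simp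
  qed
  show ?thesis unfolding LDE_class_def mem_Collect_eq
    using an cpx rl unfolding C0_def by blast
qed



end
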